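(* Let $H\in(0,1/2)$, $\lambda,\theta>0$, $a\neq0$, let $$R_Y(\tau)=\theta^2\Big(\frac{\Gamma(2H+1)\cosh(\lambda\tau)}{2\lambda^{2H}}-H\int_0^\tau\cosh(\lambda(\tau-u))\,u^{2H-1}\,\mathsf{d}u\Big),\qquad\tau\ge0,$$ and $R_{Z^{(a)}}(\tau)=\exp(a^2R_Y(0))\big(\exp(a^2R_Y(\tau))-1\big)$, $\tau\ge0$. Then $R_{Z^{(a)}}\in\mathcal{C}^\infty((0,\infty);\mathbb{R})$ and $$R_{Z^{(a)}}(\tau)=c_0-c_1\tau^{2H}+o(\tau^{2H}),\qquad\tau\to0,$$ with $c_0=\exp(a^2R_Y(0))\big(\exp(a^2R_Y(0))-1\big)$ and $c_1=\frac{a^2\theta^2}{2}\exp(2a^2R_Y(0))$.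
   Context: $R_Y$ is the covariance function of the stationary fractional Ornstein–Uhlenbeck process $Y_t=\mu+\theta e^{-\lambda t}\int_{-\infty}^te^{\lambda s}\,\mathsf{d}B_s$ (with $B$ a fractional Brownian motion of Hurst parameter $H$), and $R_{Z^{(a)}}$ is the covariance function of the stationary process $Z^{(a)}_t=e^{a(Y_t-\mu)}$, i.e. $\mathrm{Cov}(Z^{(a)}_s,Z^{(a)}_t)=R_{Z^{(a)}}(|t-s|)$. *)

theory Defs
  imports "HOL-Analysis.Analysis" "HOL-Library.Landau_Symbols"
begin

definition R_Y :: "real \<Rightarrow> real \<Rightarrow> real \<Rightarrow> real \<Rightarrow> real" where
  "R_Y H lam \<theta> \<tau> = \<theta>\<^sup>2 * (Gamma (2*H + 1) * cosh (lam * \<tau>) / (2 * lam powr (2*H))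
      - H * (LBINT u=0..\<tau>. cosh (lam * (\<tau> - u)) * u powr (2*H - 1)))"

definition R_Z :: "real \<Rightarrow> real \<Rightarrow> real \<Rightarrow> real \<Rightarrow> real \<Rightarrow> real" where
  "R_Z H lam \<theta> a \<tau> = exp (a\<^sup>2 * R_Y H lam \<theta> 0) * (exp (a\<^sup>2 * R_Y H lam \<theta> \<tau>) - 1)"

end

theory Submission
  imports Defs "HOL-Real_Asymp.Real_Asymp"
begin


lemma exp_quad_bound:
  fixes x :: real assumes "\<bar>x\<bar> \<le> 1"
  shows "\<bar>exp x - 1 - x\<bar> \<le> x\<^sup>2"
proof -
  have lo: "0 \<le> exp x - 1 - x" using exp_ge_add_one_self[of x] by linarith
  have up: "exp x \<le> 1 + x + x\<^sup>2"
  proof (cases "x \<ge> 0")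
    case True thus ?thesis using exp_bound assms by auto
  next
    case False
    have "1 - x \<le> exp (-x)" using exp_ge_add_one_self[of "-x"] by simp
    hence "exp x \<le> 1 / (1 - x)" using False by (simp add: exp_minus field_simps)
    also have "\<dots> \<le> 1 + x + x\<^sup>2"
      using False mult_nonpos_nonneg[of x "x*x"] by (simp add: field_simps power2_eq_square)
    finally show ?thesis .
  qed
  show ?thesis using lo up by simp
qed

lemma absint_pw:
  fixes p t :: real assumes "p > -1" "0 \<le> t"
  shows "(\<lambda>x. x powr p) absolutely_integrable_on {0..t}"
  by (rule nonnegative_absolutely_integrable_1[OF integrable_on_powr_from_0[OF assms]]) simp

lemma absint_prod:
  fixes p t :: real and g :: "real \<Rightarrow> real"
  assumes "continuous_on {0..t} g" "p > -1" "0 \<le> t"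
  shows "(\<lambda>x. g x * x powr p) absolutely_integrable_on {0..t}"
proof (rule absolutely_integrable_bounded_measurable_product_real)
  show "g \<in> borel_measurable (lebesgue_on {0..t})"
    by (rule continuous_imp_measurable_on_sets_lebesgue[OF assms(1)]) simp
  show "bounded (g ` {0..t})"
    by (intro compact_imp_bounded compact_continuous_image assms) auto
qed (use absint_pw assms in auto)

lemma LBINT_eq:
  fixes p t :: real and g :: "real \<Rightarrow> real"
  assumes "continuous_on UNIV g" "p > -1" "0 \<le> t"
  shows "(LBINT x=0..t. g x * x powr p) = integral {0..t} (\<lambda>x. g x * x powr p)"
proof -
  have ai: "(\<lambda>x. g x * x powr p) absolutely_integrable_on {0..t}"
    using absint_prod assms continuous_on_subset by blast
  have gm: "g \<in> borel_measurable borel" using assms(1) borel_measurable_continuous_onI by blast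
  have m: "(\<lambda>x. indicator {0..t} x *\<^sub>R (g x * x powr p)) \<in> borel_measurable lborel"
  proof -
    have m1: "(\<lambda>x::real. x powr p) \<in> borel_measurable borel"
      by (intro powr_real_measurable measurable_ident_sets measurable_const) auto
    have m2: "(\<lambda>x. g x * x powr p) \<in> borel_measurable borel"
      using gm m1 by (rule borel_measurable_times)
    have "(\<lambda>x. indicator {0..t} x *\<^sub>R (g x * x powr p)) \<in> borel_measurable borel"
      by (intro borel_measurable_scaleR m2) auto
    thus ?thesis by (simp only: measurable_lborel2)
  qed
  have si: "set_integrable lborel {0..t} (\<lambda>x. g x * x powr p)"
    using ai m unfolding set_integrable_def by (simp only: integrable_completion)
  have "(LBINT x=0..t. g x * x powr p) = (LBINT x:{0..t}. g x * x powr p)"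
    unfolding zero_ereal_def by (rule interval_integral_Icc[OF assms(3)])
  also have "\<dots> = integral {0..t} (\<lambda>x. g x * x powr p)"
    by (rule set_borel_integral_eq_integral(2)[OF si])
  finally show ?thesis .
qed



lemma ftc:
  fixes g :: "real \<Rightarrow> real" and p x :: real
  assumes g: "continuous_on UNIV g" and p: "p > -1" and x: "x > 0"
  shows "((\<lambda>y. integral {0..y} (\<lambda>u. g u * u powr p)) has_real_derivative g x * x powr p) (at x)"
proof -
  define F where "F = (\<lambda>u. g u * u powr p)"
  have cont: "continuous_on {x/2..2*x} F"
    unfolding F_def using x
    by (intro continuous_intros continuous_on_subset[OF g]) auto
  have "((\<lambda>y. integral {x/2..y} F) has_real_derivative F x) (at x within {x/2..2*x})"
    by (rule integral_has_real_derivative[OF cont]) (use x in auto)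
  moreover have "at x within {x/2..2*x} = at x"
    by (rule at_within_interior) (use x in auto)
  ultimately have d1: "((\<lambda>y. integral {x/2..y} F) has_real_derivative F x) (at x)" by simp
  have d2: "((\<lambda>y. integral {0..x/2} F + integral {x/2..y} F) has_real_derivative F x) (at x)"
    using DERIV_add[OF DERIV_const d1] by simp
  have eq: "integral {0..x/2} F + integral {x/2..y} F = integral {0..y} F" if "y \<in> {x/2<..<2*x}" for y
  proof -
    have i: "F integrable_on {0..y}"
      unfolding F_def using absint_prod[OF continuous_on_subset[OF g] p, of y] that x
      using set_lebesgue_integral_eq_integral(1) by force
    show ?thesis using Henstock_Kurzweil_Integration.integral_combine[of 0 "x/2" y F] i that x by auto
  qed
  show ?thesis
    using has_field_derivative_transform_within_open[OF d2, of "{x/2<..<2*x}"] eq x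
    unfolding F_def by auto
qed

inductive_set SM :: "(real \<Rightarrow> real) set" where
  const: "(\<lambda>x. c) \<in> SM"
| pw: "(\<lambda>x. x powr p) \<in> SM"
| ch: "(\<lambda>x. cosh (l * x)) \<in> SM"
| sh: "(\<lambda>x. sinh (l * x)) \<in> SM"
| intc: "p > -1 \<Longrightarrow> (\<lambda>x. integral {0..x} (\<lambda>u. cosh (l * u) * u powr p)) \<in> SM"
| ints: "p > -1 \<Longrightarrow> (\<lambda>x. integral {0..x} (\<lambda>u. sinh (l * u) * u powr p)) \<in> SM"
| add: "f \<in> SM \<Longrightarrow> g \<in> SM \<Longrightarrow> (\<lambda>x. f x + g x) \<in> SM"
| mult: "f \<in> SM \<Longrightarrow> g \<in> SM \<Longrightarrow> (\<lambda>x. f x * g x) \<in> SM"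
| expo: "f \<in> SM \<Longrightarrow> (\<lambda>x. exp (f x)) \<in> SM"
| cong: "f \<in> SM \<Longrightarrow> (\<And>x. x > 0 \<Longrightarrow> g x = f x) \<Longrightarrow> g \<in> SM"

lemma SM_deriv:
  assumes "f \<in> SM"
  shows "\<exists>g\<in>SM. \<forall>x>0. (f has_real_derivative g x) (at x)"
  using assms
proof induction
  case (const c)
  show ?case by (rule bexI[of _ "\<lambda>x. 0"]) (auto intro: SM.const)
next
  case (pw p)
  have S: "(\<lambda>x. p * x powr (p - 1)) \<in> SM" by (intro SM.mult SM.const SM.pw)
  show ?case by (rule bexI[OF _ S]) (simp add: has_real_derivative_powr)
next
  case (ch l)
  have S: "(\<lambda>x. l * sinh (l * x)) \<in> SM" by (intro SM.mult SM.const SM.sh)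
  have D: "((\<lambda>x. cosh (l * x)) has_real_derivative l * sinh (l * x)) (at x)" for x
    using has_field_derivative_cosh[OF DERIV_cmult_Id[of l], of x UNIV] by (simp add: ac_simps)
  show ?case by (rule bexI[OF _ S]) (simp add: D)
next
  case (sh l)
  have S: "(\<lambda>x. l * cosh (l * x)) \<in> SM" by (intro SM.mult SM.const SM.ch)
  have D: "((\<lambda>x. sinh (l * x)) has_real_derivative l * cosh (l * x)) (at x)" for x
    using has_field_derivative_sinh[OF DERIV_cmult_Id[of l], of x UNIV] by (simp add: ac_simps)
  show ?case by (rule bexI[OF _ S]) (simp add: D)
next
  case (intc p l)
  have S: "(\<lambda>x. cosh (l * x) * x powr p) \<in> SM" by (intro SM.mult SM.ch SM.pw)
  have c: "continuous_on UNIV (\<lambda>u. cosh (l * u))" by (intro continuous_intros)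
  show ?case by (rule bexI[OF _ S]) (use ftc[OF c intc] in simp)
next
  case (ints p l)
  have S: "(\<lambda>x. sinh (l * x) * x powr p) \<in> SM" by (intro SM.mult SM.sh SM.pw)
  have c: "continuous_on UNIV (\<lambda>u. sinh (l * u))" by (intro continuous_intros)
  show ?case by (rule bexI[OF _ S]) (use ftc[OF c ints] in simp)
next
  case (add f g)
  obtain f' where f': "f' \<in> SM" "\<forall>x>0. (f has_real_derivative f' x) (at x)" using add by blast
  obtain g' where g': "g' \<in> SM" "\<forall>x>0. (g has_real_derivative g' x) (at x)" using add by blast
  have S: "(\<lambda>x. f' x + g' x) \<in> SM" using f' g' by (intro SM.add) auto
  show ?case by (rule bexI[OF _ S]) (use f' g' in \<open>simp add: DERIV_add\<close>)
next
  case (mult f g)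
  obtain f' where f': "f' \<in> SM" "\<forall>x>0. (f has_real_derivative f' x) (at x)" using mult by blast
  obtain g' where g': "g' \<in> SM" "\<forall>x>0. (g has_real_derivative g' x) (at x)" using mult by blast
  have S: "(\<lambda>x. f' x * g x + g' x * f x) \<in> SM" using f' g' mult.hyps by (intro SM.add SM.mult) auto
  show ?case by (rule bexI[OF _ S]) (use f' g' in \<open>simp add: DERIV_mult\<close>)
next
  case (expo f)
  obtain f' where f': "f' \<in> SM" "\<forall>x>0. (f has_real_derivative f' x) (at x)" using expo by blast
  have S: "(\<lambda>x. exp (f x) * f' x) \<in> SM" using f' expo.hyps by (intro SM.mult SM.expo) auto
  show ?case by (rule bexI[OF _ S]) (use f' in \<open>simp add: DERIV_exp[THEN DERIV_chain2]\<close>)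
next
  case (cong f g)
  obtain f' where f': "f' \<in> SM" "\<forall>x>0. (f has_real_derivative f' x) (at x)" using cong by blast
  have D: "(g has_real_derivative f' x) (at x)" if "x > 0" for x
    by (rule has_field_derivative_transform_within_open[of f "f' x" x "{0<..}" g])
       (use f' that in \<open>auto simp: cong.hyps(2)\<close>)
  show ?case by (rule bexI[OF _ f'(1)]) (simp add: D)
qed

lemma SM_higher:
  assumes "f \<in> SM"
  shows "\<exists>g\<in>SM. \<forall>x>0. (deriv ^^ k) f x = g x"
proof (induction k)
  case 0 thus ?case using assms by auto
next
  case (Suc k)
  then obtain g where g: "g \<in> SM" "\<forall>x>0. (deriv ^^ k) f x = g x" by blast
  obtain g' where g': "g' \<in> SM" "\<forall>x>0. (g has_real_derivative g' x) (at x)"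
    using SM_deriv[OF g(1)] by blast
  have D: "((deriv ^^ k) f has_real_derivative g' x) (at x)" if "x > 0" for x
    using has_field_derivative_transform_within_open[of g "g' x" x "{0<..}" "(deriv ^^ k) f"] g g' that
    by auto
  have "(deriv ^^ Suc k) f x = g' x" if "x > 0" for x
    using DERIV_imp_deriv[OF D[OF that]] by simp
  thus ?case using g' by blast
qed

lemma SM_smooth:
  assumes "f \<in> SM" "x > 0"
  shows "((deriv ^^ k) f) differentiable (at x)"
proof -
  obtain g where g: "g \<in> SM" "\<forall>x>0. (deriv ^^ k) f x = g x" using SM_higher[OF assms(1)] by blast
  obtain g' where g': "g' \<in> SM" "\<forall>x>0. (g has_real_derivative g' x) (at x)"
    using SM_deriv[OF g(1)] by blast
  have "((deriv ^^ k) f has_real_derivative g' x) (at x)"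
    using has_field_derivative_transform_within_open[of g "g' x" x "{0<..}" "(deriv ^^ k) f"] g g' assms
    by auto
  thus ?thesis using real_differentiable_def by blast
qed



lemma cosh_real_eq: "cosh (x::real) = (exp x + exp (-x)) / 2" by (simp add: cosh_def)

lemma ra1: fixes H lam :: real assumes "0<H" "H<1/2" "lam>0"
  shows "(\<lambda>\<tau>. cosh(lam*\<tau>) - 1) \<in> o[at_right 0](\<lambda>\<tau>. \<tau> powr (2*H))"
  using assms unfolding cosh_real_eq by real_asymp

lemma ra2: fixes H :: real assumes "0<H"
  shows "(\<lambda>\<tau>::real. \<tau> powr (2*H)) \<in> o[at_right 0](\<lambda>_. 1)"
  using assms by real_asymp

lemma intble:
  fixes g :: "real \<Rightarrow> real" and c t :: real
  assumes "continuous_on UNIV g" "c > -1" "0 \<le> t"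
  shows "(\<lambda>u. g u * u powr c) integrable_on {0..t}"
  using absint_prod[OF continuous_on_subset[OF assms(1)] assms(2,3)] set_lebesgue_integral_eq_integral(1)
  by blast

lemma I_split:
  fixes lam t c :: real assumes c: "c > -1" and t: "t \<ge> 0"
  shows "(LBINT u=0..t. cosh (lam*(t-u)) * u powr c) =
     cosh (lam*t) * integral {0..t} (\<lambda>u. cosh (lam*u) * u powr c)
   - sinh (lam*t) * integral {0..t} (\<lambda>u. sinh (lam*u) * u powr c)"
proof -
  have cg: "continuous_on UNIV (\<lambda>u. cosh (lam*(t-u)))" by (intro continuous_intros)
  have c1: "continuous_on UNIV (\<lambda>u. cosh (lam*u))" by (intro continuous_intros)
  have c2: "continuous_on UNIV (\<lambda>u. sinh (lam*u))" by (intro continuous_intros)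
  have i1: "(\<lambda>u. cosh (lam*u) * u powr c) integrable_on {0..t}" by (rule intble[OF c1 c t])
  have i2: "(\<lambda>u. sinh (lam*u) * u powr c) integrable_on {0..t}" by (rule intble[OF c2 c t])
  have "(LBINT u=0..t. cosh (lam*(t-u)) * u powr c) = integral {0..t} (\<lambda>u. cosh (lam*(t-u)) * u powr c)"
    by (rule LBINT_eq[OF cg c t])
  also have "\<dots> = integral {0..t} (\<lambda>u. cosh (lam*t) * (cosh (lam*u) * u powr c) - sinh (lam*t) * (sinh (lam*u) * u powr c))"
    by (intro integral_cong) (simp add: right_diff_distrib cosh_diff algebra_simps)
  also have "\<dots> = integral {0..t} (\<lambda>u. cosh (lam*t) * (cosh (lam*u) * u powr c)) - integral {0..t} (\<lambda>u. sinh (lam*t) * (sinh (lam*u) * u powr c))"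
    by (rule integral_diff) (use i1 i2 in \<open>auto intro: integrable_on_mult_right\<close>)
  also have "\<dots> = cosh (lam*t) * integral {0..t} (\<lambda>u. cosh (lam*u) * u powr c)
   - sinh (lam*t) * integral {0..t} (\<lambda>u. sinh (lam*u) * u powr c)"
    by simp
  finally show ?thesis .
qed



lemma part1:
  fixes H lam \<theta> a :: real
  assumes "0 < H" "H < 1/2" "lam > 0" "\<theta> > 0" "a \<noteq> 0"
  shows "R_Z H lam \<theta> a \<in> SM"
proof -
  define G where "G = Gamma (2*H + 1)"
  define Lp where "Lp = lam powr (2*H)"
  define A where "A = (\<lambda>\<tau>. integral {0..\<tau>} (\<lambda>u. cosh (lam*u) * u powr (2*H-1)))"
  define B where "B = (\<lambda>\<tau>. integral {0..\<tau>} (\<lambda>u. sinh (lam*u) * u powr (2*H-1)))"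
  define E where "E = exp (a\<^sup>2 * R_Y H lam \<theta> 0)"
  define K where "K = (\<lambda>\<tau>. (a\<^sup>2*\<theta>\<^sup>2*G/(2*Lp)) * cosh (lam*\<tau>) + (-(a\<^sup>2*\<theta>\<^sup>2*H)) * (cosh (lam*\<tau>) * A \<tau>)
        + (a\<^sup>2*\<theta>\<^sup>2*H) * (sinh (lam*\<tau>) * B \<tau>))"
  have c1: "2*H-1 > -1" using assms by simp
  have KS: "K \<in> SM" unfolding K_def A_def B_def
    by (intro SM.add SM.mult SM.const SM.ch SM.sh SM.intc SM.ints c1)
  have FS: "(\<lambda>\<tau>. E * exp (K \<tau>) + (-E)) \<in> SM"
    by (intro SM.add SM.mult SM.const SM.expo KS)
  have RY: "a\<^sup>2 * R_Y H lam \<theta> \<tau> = K \<tau>" if "\<tau> \<ge> 0" for \<tau>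
    unfolding R_Y_def K_def A_def B_def G_def Lp_def I_split[OF c1 that]
    by (simp add: algebra_simps)
  show ?thesis
  proof (rule SM.cong[OF FS])
    fix x :: real assume "x > 0"
    thus "R_Z H lam \<theta> a x = E * exp (K x) + - E"
      unfolding R_Z_def E_def using RY[of x] by (simp add: algebra_simps)
  qed
qed



lemma part2:
  fixes H lam \<theta> a :: real
  assumes H0: "0 < H" and H1: "H < 1/2" and lam: "lam > 0" and th: "\<theta> > 0" and a: "a \<noteq> 0"
  shows "(\<lambda>\<tau>. R_Z H lam \<theta> a \<tau> - (exp (a\<^sup>2 * R_Y H lam \<theta> 0) * (exp (a\<^sup>2 * R_Y H lam \<theta> 0) - 1)
           - a\<^sup>2 * \<theta>\<^sup>2 / 2 * exp (2 * a\<^sup>2 * R_Y H lam \<theta> 0) * \<tau> powr (2*H)))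
         \<in> o[at_right 0](\<lambda>\<tau>. \<tau> powr (2*H))"
proof -
  define G where "G = Gamma (2*H + 1)"
  define Lp where "Lp = lam powr (2*H)"
  define g where "g = (\<lambda>\<tau>::real. \<tau> powr (2*H))"
  define J where "J = (\<lambda>\<tau>. integral {0..\<tau>} (\<lambda>u. cosh (lam*(\<tau>-u)) * u powr (2*H-1)))"
  define R0 where "R0 = R_Y H lam \<theta> 0"
  define E where "E = exp (a\<^sup>2 * R0)"
  define d where "d = (\<lambda>\<tau>. R_Y H lam \<theta> \<tau> - R0)"
  define e1 where "e1 = (\<lambda>\<tau>. d \<tau> + \<theta>\<^sup>2/2 * g \<tau>)"
  define C where "C = \<theta>\<^sup>2 * (\<bar>G\<bar>/(2*Lp) + 1/2)"
  have c1: "2*H-1 > -1" using assms by simp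
  have Lp: "Lp > 0" unfolding Lp_def using lam by simp
  have R0: "R0 = \<theta>\<^sup>2 * (G / (2*Lp))" unfolding R0_def R_Y_def G_def Lp_def by (simp add: zero_ereal_def[symmetric])
  have RYJ: "R_Y H lam \<theta> \<tau> = \<theta>\<^sup>2 * (G*cosh(lam*\<tau>)/(2*Lp) - H * J \<tau>)" if "\<tau> \<ge> 0" for \<tau>
  proof -
    have cg: "continuous_on UNIV (\<lambda>u. cosh (lam*(\<tau>-u)))" by (intro continuous_intros)
    show ?thesis unfolding R_Y_def J_def G_def Lp_def LBINT_eq[OF cg c1 that] by simp
  qed
  have Jb: "g \<tau>/(2*H) \<le> J \<tau> \<and> J \<tau> \<le> cosh(lam*\<tau>)*g \<tau>/(2*H)" if t: "\<tau> \<ge> 0" for \<tau>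
  proof -
    have hp: "((\<lambda>x. x powr (2*H-1)) has_integral g \<tau>/(2*H)) {0..\<tau>}"
      using has_integral_powr_from_0[OF c1 t] by (simp add: g_def)
    have ip: "(\<lambda>x. x powr (2*H-1)) integrable_on {0..\<tau>}" using hp by blast
    have cg: "continuous_on UNIV (\<lambda>u. cosh (lam*(\<tau>-u)))" by (intro continuous_intros)
    have iJ: "(\<lambda>u. cosh (lam*(\<tau>-u)) * u powr (2*H-1)) integrable_on {0..\<tau>}"
      by (rule intble[OF cg c1 t])
    have "integral {0..\<tau>} (\<lambda>x. x powr (2*H-1)) \<le> J \<tau>" unfolding J_def
    proof (rule integral_le[OF ip iJ])
      fix x assume "x \<in> {0..\<tau>}"
      show "x powr (2*H-1) \<le> cosh (lam*(\<tau>-x)) * x powr (2*H-1)"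
        using mult_right_mono[OF cosh_real_ge_1[of "lam*(\<tau>-x)"] powr_ge_zero[of x "2*H-1"]] by simp
    qed
    moreover have "J \<tau> \<le> integral {0..\<tau>} (\<lambda>x. cosh (lam*\<tau>) * x powr (2*H-1))" unfolding J_def
    proof (rule integral_le[OF iJ integrable_on_mult_right[OF ip]])
      fix x assume x: "x \<in> {0..\<tau>}"
      have "cosh (lam*(\<tau>-x)) \<le> cosh (lam*\<tau>)"
        using x lam by (subst cosh_real_nonneg_le_iff) (auto intro: mult_left_mono)
      thus "cosh (lam*(\<tau>-x)) * x powr (2*H-1) \<le> cosh (lam*\<tau>) * x powr (2*H-1)"
        by (rule mult_right_mono) simp
    qed
    ultimately show ?thesis using integral_unique[OF hp] by simp
  qed
  have ev01: "eventually (\<lambda>\<tau>::real. 0 < \<tau> \<and> \<tau> < 1) (at_right 0)"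
    unfolding eventually_at_right_field by (intro exI[of _ 1]) auto
  have e1bound: "eventually (\<lambda>\<tau>. norm (e1 \<tau>) \<le> C * norm (cosh (lam*\<tau>) - 1)) (at_right 0)"
    using ev01
  proof eventually_elim
    case (elim \<tau>)
    define D where "D = cosh (lam*\<tau>) - 1"
    define P where "P = H * J \<tau> - g \<tau>/2"
    have D0: "D \<ge> 0" unfolding D_def using cosh_real_ge_1 by simp
    have g01: "0 \<le> g \<tau>" "g \<tau> \<le> 1" unfolding g_def using elim H0 by (auto intro: powr_le1)
    have JJ: "g \<tau>/(2*H) \<le> J \<tau>" "J \<tau> \<le> cosh(lam*\<tau>)*g \<tau>/(2*H)" using Jb[of \<tau>] elim by auto
    have "H * (g \<tau>/(2*H)) \<le> H * J \<tau>" using JJ(1) H0 by (intro mult_left_mono) auto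
    hence P0: "P \<ge> 0" unfolding P_def using H0 by simp
    have "H * J \<tau> \<le> H * (cosh(lam*\<tau>)*g \<tau>/(2*H))" using JJ(2) H0 by (intro mult_left_mono) auto
    hence "P \<le> D * g \<tau> / 2" unfolding P_def D_def using H0 by (simp add: algebra_simps)
    also have "\<dots> \<le> D / 2" using D0 g01 mult_left_mono[of "g \<tau>" 1 D] by simp
    finally have P1: "P \<le> D/2" .
    have e1eq: "e1 \<tau> = \<theta>\<^sup>2 * (G * D / (2*Lp) - P)"
    proof -
      have "R_Y H lam \<theta> \<tau> = \<theta>\<^sup>2 * (G*cosh(lam*\<tau>)/(2*Lp) - H * J \<tau>)" using RYJ elim by simp
      thus ?thesis unfolding e1_def d_def R0 D_def P_def
        by (simp add: algebra_simps diff_divide_distrib)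
    qed
    have "\<bar>G * D / (2*Lp) - P\<bar> \<le> \<bar>G\<bar> * D / (2*Lp) + D/2"
    proof -
      have "\<bar>G * D / (2*Lp)\<bar> = \<bar>G\<bar> * D / (2*Lp)" using D0 Lp by (simp add: abs_mult)
      thus ?thesis using P0 P1 by linarith
    qed
    hence "\<bar>e1 \<tau>\<bar> \<le> \<theta>\<^sup>2 * (\<bar>G\<bar> * D / (2*Lp) + D/2)"
      unfolding e1eq abs_mult by (simp add: mult_left_mono)
    also have "\<dots> = C * \<bar>D\<bar>" unfolding C_def using D0 by (simp add: algebra_simps)
    finally show ?case unfolding D_def by simp
  qed
  have e1O: "e1 \<in> O[at_right 0](\<lambda>\<tau>. cosh (lam*\<tau>) - 1)" using e1bound by (rule bigoI)
  have e1o: "e1 \<in> o[at_right 0](g)"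
    unfolding g_def using landau_o.big_small_trans[OF e1O ra1[OF H0 H1 lam]] .
  have dfun: "d = (\<lambda>\<tau>. e1 \<tau> - \<theta>\<^sup>2/2 * g \<tau>)" unfolding e1_def by auto
  have dO: "d \<in> O[at_right 0](g)"
    unfolding dfun by (intro sum_in_bigo(2) landau_o.small_imp_big[OF e1o]) simp
  have do1: "d \<in> o[at_right 0](\<lambda>_. 1)"
    using landau_o.big_small_trans[OF dO] ra2[OF H0] unfolding g_def by blast
  have dlim: "(d \<longlongrightarrow> 0) (at_right 0)" using smalloD_tendsto[OF do1] by simp
  have ad: "((\<lambda>\<tau>. a\<^sup>2 * d \<tau>) \<longlongrightarrow> 0) (at_right 0)" using tendsto_mult_right_zero[OF dlim] by simp
  have evs: "eventually (\<lambda>\<tau>. \<bar>a\<^sup>2 * d \<tau>\<bar> < 1) (at_right 0)"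
    using order_tendstoD(2)[OF tendsto_rabs_zero[OF ad]] by simp
  define \<psi> where "\<psi> = (\<lambda>\<tau>. exp (a\<^sup>2 * d \<tau>) - 1 - a\<^sup>2 * d \<tau>)"
  have psibound: "eventually (\<lambda>\<tau>. norm (\<psi> \<tau>) \<le> (a\<^sup>2)\<^sup>2 * norm (d \<tau> * d \<tau>)) (at_right 0)"
    using evs
  proof eventually_elim
    case (elim \<tau>)
    have "\<bar>\<psi> \<tau>\<bar> \<le> (a\<^sup>2 * d \<tau>)\<^sup>2" unfolding \<psi>_def by (rule exp_quad_bound) (use elim in simp)
    thus ?case by (simp add: power2_eq_square abs_mult mult_ac)
  qed
  have psiO: "\<psi> \<in> O[at_right 0](\<lambda>\<tau>. d \<tau> * d \<tau>)" using psibound by (rule bigoI)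
  have ddo: "(\<lambda>\<tau>. d \<tau> * d \<tau>) \<in> o[at_right 0](g)"
    using landau_o.big_small_mult[OF dO do1] by simp
  have psio: "\<psi> \<in> o[at_right 0](g)" using landau_o.big_small_trans[OF psiO ddo] .
  have fin: "(\<lambda>\<tau>. E\<^sup>2 * (\<psi> \<tau> + a\<^sup>2 * e1 \<tau>)) \<in> o[at_right 0](g)"
  proof -
    have ae: "(\<lambda>x. a\<^sup>2 * e1 x) \<in> o[at_right 0](g)" using e1o a by simp
    have ps: "(\<lambda>x. \<psi> x + a\<^sup>2 * e1 x) \<in> o[at_right 0](g)" by (rule sum_in_smallo(1)[OF psio ae])
    have "E\<^sup>2 \<noteq> 0" unfolding E_def by simp
    thus ?thesis using ps by simp
  qed
  have ident: "R_Z H lam \<theta> a \<tau> - (exp (a\<^sup>2 * R_Y H lam \<theta> 0) * (exp (a\<^sup>2 * R_Y H lam \<theta> 0) - 1)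
           - a\<^sup>2 * \<theta>\<^sup>2 / 2 * exp (2 * a\<^sup>2 * R_Y H lam \<theta> 0) * \<tau> powr (2*H)) = E\<^sup>2 * (\<psi> \<tau> + a\<^sup>2 * e1 \<tau>)" for \<tau>
  proof -
    have RYd: "R_Y H lam \<theta> \<tau> = R0 + d \<tau>" unfolding d_def by simp
    have ex: "exp (a\<^sup>2 * R_Y H lam \<theta> \<tau>) = E * exp (a\<^sup>2 * d \<tau>)"
      unfolding RYd E_def by (simp add: distrib_left exp_add)
    have ex2: "exp (2 * a\<^sup>2 * R0) = E\<^sup>2" unfolding E_def
      by (simp add: power2_eq_square exp_add[symmetric])
    show ?thesis unfolding R_Z_def ex R0_def[symmetric] ex2 E_def[symmetric] \<psi>_def e1_def g_def
      by (simp add: algebra_simps power2_eq_square)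
  qed
  show ?thesis unfolding ident using fin unfolding g_def .
qed


theorem lemma3:
  fixes H lam \<theta> a :: real
  assumes "0 < H" "H < 1/2" "lam > 0" "\<theta> > 0" "a \<noteq> 0"
  defines "c0 \<equiv> exp (a\<^sup>2 * R_Y H lam \<theta> 0) * (exp (a\<^sup>2 * R_Y H lam \<theta> 0) - 1)"
      and "c1 \<equiv> a\<^sup>2 * \<theta>\<^sup>2 / 2 * exp (2 * a\<^sup>2 * R_Y H lam \<theta> 0)"
  shows "(\<forall>k::nat. \<forall>x::real. x > 0 \<longrightarrow> ((deriv ^^ k) (R_Z H lam \<theta> a)) differentiable (at x))
       \<and> (\<lambda>\<tau>. R_Z H lam \<theta> a \<tau> - (c0 - c1 * \<tau> powr (2*H))) \<in> o[at_right 0](\<lambda>\<tau>. \<tau> powr (2*H))"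
proof -
  have "\<forall>k::nat. \<forall>x::real. x > 0 \<longrightarrow> ((deriv ^^ k) (R_Z H lam \<theta> a)) differentiable (at x)"
    using SM_smooth[OF part1[OF assms(1-5)]] by blast
  moreover have "(\<lambda>\<tau>. R_Z H lam \<theta> a \<tau> - (c0 - c1 * \<tau> powr (2*H))) \<in> o[at_right 0](\<lambda>\<tau>. \<tau> powr (2*H))"
    unfolding c0_def c1_def by (rule part2[OF assms(1-5)])
  ultimately show ?thesis by blast
qed

end
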